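(* Let $\mathbf{C}$ be a covering of a finite nonempty set $U$. Then $Cov(\mathbf{C})=\mathbf{C}$ if and only if $\mathbf{C}$ is an invariable covering.
   Context: A covering of $U$ is a family (set) $\mathbf{C}$ of subsets of $U$ with $\emptyset\notin\mathbf{C}$ and $\bigcup\mathbf{C}=U$; its elements are called blocks. For $x\in U$, the neighborhood of $x$ is $N(x)=\bigcap\{K\in\mathbf{C}: x\in K\}$, and $Cov(\mathbf{C})=\{N(x): x\in U\}$. The membership repeat degree of $x\in U$ is $\partial(x)=|\{K\in\mathbf{C}: x\in K\}|$. The common block repeat degree of $(x,y)\in U\times U$ is $\lambda(x,y)=|\{K\in\mathbf{C}: \{x,y\}\subseteq K\}|$. A block $K\in\mathbf{C}$ is a core block of $x\in U$ if $x\in K$ and $\lambda(x,y)=\partial(x)$ for every $y\in K$. A block $K\in\mathbf{C}$ is a reducible element of $\mathbf{C}$ if $K$ is the union of some subfamily of $\mathbf{C}\setminus\{K\}$; otherwise it is irreducible. $\mathbf{C}$ is irreducible if all its blocks are irreducible elements. $\mathbf{C}$ is an invariable covering if $\mathbf{C}$ is irreducible and every $x\in U$ has a core block in $\mathbf{C}$. *)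

theory Defs
  imports Main
begin

definition covering :: "'a set \<Rightarrow> 'a set set \<Rightarrow> bool" where
  "covering U C \<longleftrightarrow> {} \<notin> C \<and> \<Union>C = U"

definition nbhd :: "'a set set \<Rightarrow> 'a \<Rightarrow> 'a set" where
  "nbhd C x = \<Inter>{K \<in> C. x \<in> K}"

definition Cov :: "'a set \<Rightarrow> 'a set set \<Rightarrow> 'a set set" where
  "Cov U C = {nbhd C x | x. x \<in> U}"

definition mrd :: "'a set set \<Rightarrow> 'a \<Rightarrow> nat" where
  "mrd C x = card {K \<in> C. x \<in> K}"

definition cbrd :: "'a set set \<Rightarrow> 'a \<Rightarrow> 'a \<Rightarrow> nat" where
  "cbrd C x y = card {K \<in> C. {x, y} \<subseteq> K}"

definition core_block :: "'a set set \<Rightarrow> 'a \<Rightarrow> 'a set \<Rightarrow> bool" where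
  "core_block C x K \<longleftrightarrow> K \<in> C \<and> x \<in> K \<and> (\<forall>y\<in>K. cbrd C x y = mrd C x)"

definition reducible_elem :: "'a set set \<Rightarrow> 'a set \<Rightarrow> bool" where
  "reducible_elem C K \<longleftrightarrow> K \<in> C \<and> (\<exists>D \<subseteq> C - {K}. K = \<Union>D)"

definition irreducible_cov :: "'a set set \<Rightarrow> bool" where
  "irreducible_cov C \<longleftrightarrow> (\<forall>K\<in>C. \<not> reducible_elem C K)"

definition invariable_covering :: "'a set \<Rightarrow> 'a set set \<Rightarrow> bool" where
  "invariable_covering U C \<longleftrightarrow> irreducible_cov C \<and> (\<forall>x\<in>U. \<exists>K. core_block C x K)"

end

theory Submission
  imports Defs
begin

lemma nbhd_sub: "K \<in> C \<Longrightarrow> x \<in> K \<Longrightarrow> nbhd C x \<subseteq> K"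
  unfolding nbhd_def by blast

lemma nbhd_mem: "x \<in> nbhd C x"
  unfolding nbhd_def by blast

lemma core_iff:
  assumes fin: "finite C"
  shows "core_block C x K \<longleftrightarrow> K \<in> C \<and> K = nbhd C x"
proof
  assume h: "core_block C x K"
  hence KC: "K \<in> C" and xK: "x \<in> K" and cb: "\<forall>y\<in>K. cbrd C x y = mrd C x"
    unfolding core_block_def by auto
  have "K \<subseteq> nbhd C x"
  proof
    fix y assume yK: "y \<in> K"
    let ?A = "{K \<in> C. {x, y} \<subseteq> K}" and ?B = "{K \<in> C. x \<in> K}"
    have sub: "?A \<subseteq> ?B" by auto
    have fB: "finite ?B" using fin by auto
    have "card ?A = card ?B" using cb yK unfolding cbrd_def mrd_def by auto
    hence "?A = ?B" using card_subset_eq[OF fB sub] by simp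
    thus "y \<in> nbhd C x" unfolding nbhd_def by blast
  qed
  with nbhd_sub[OF KC xK] KC show "K \<in> C \<and> K = nbhd C x" by auto
next
  assume h: "K \<in> C \<and> K = nbhd C x"
  have "\<forall>y\<in>K. cbrd C x y = mrd C x"
  proof
    fix y assume "y \<in> K"
    hence "y \<in> nbhd C x" using h by simp
    hence "{K \<in> C. {x, y} \<subseteq> K} = {K \<in> C. x \<in> K}" unfolding nbhd_def by blast
    thus "cbrd C x y = mrd C x" unfolding cbrd_def mrd_def by simp
  qed
  thus "core_block C x K" using h nbhd_mem[of x C] unfolding core_block_def by auto
qed

theorem theorem23:
  fixes U :: "'a set" and C :: "'a set set"
  assumes "finite U" and "U \<noteq> {}" and "covering U C"
  shows "Cov U C = C \<longleftrightarrow> invariable_covering U C"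
proof -
  have cov: "{} \<notin> C" "\<Union>C = U" using assms(3) unfolding covering_def by auto
  have "C \<subseteq> Pow U" using cov(2) by blast
  hence fin: "finite C" using assms(1) by (simp add: finite_subset)
  have core: "(\<forall>x\<in>U. \<exists>K. core_block C x K) \<longleftrightarrow> Cov U C \<subseteq> C"
  proof
    assume h: "\<forall>x\<in>U. \<exists>K. core_block C x K"
    show "Cov U C \<subseteq> C"
    proof
      fix N assume "N \<in> Cov U C"
      then obtain x where x: "x \<in> U" "N = nbhd C x" unfolding Cov_def by blast
      then obtain K where "core_block C x K" using h by blast
      thus "N \<in> C" using core_iff[OF fin] x by metis
    qed
  next
    assume h: "Cov U C \<subseteq> C"
    show "\<forall>x\<in>U. \<exists>K. core_block C x K"
    proof
      fix x assume "x \<in> U"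
      hence "nbhd C x \<in> C" using h unfolding Cov_def by blast
      hence "core_block C x (nbhd C x)" using core_iff[OF fin] by simp
      thus "\<exists>K. core_block C x K" by blast
    qed
  qed
  show ?thesis
  proof
    assume eq: "Cov U C = C"
    have irr: "irreducible_cov C"
      unfolding irreducible_cov_def
    proof
      fix K assume KC: "K \<in> C"
      then obtain x where xU: "x \<in> U" and Kx: "K = nbhd C x" using eq unfolding Cov_def by blast
      show "\<not> reducible_elem C K"
      proof
        assume "reducible_elem C K"
        then obtain D where D: "D \<subseteq> C - {K}" "K = \<Union>D" unfolding reducible_elem_def by blast
        have "x \<in> K" using Kx nbhd_mem by metis
        then obtain E where E: "E \<in> D" "x \<in> E" using D by blast
        have "E \<subseteq> K" using D E by blast
        moreover have "E \<in> C" using D E by blast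
        hence "K \<subseteq> E" using Kx nbhd_sub[of E C x] E by simp
        ultimately show False using D E by blast
      qed
    qed
    show "invariable_covering U C" unfolding invariable_covering_def
      using irr core eq by auto
  next
    assume inv: "invariable_covering U C"
    hence irr: "irreducible_cov C" and sub: "Cov U C \<subseteq> C"
      unfolding invariable_covering_def using core by auto
    have "C \<subseteq> Cov U C"
    proof
      fix K assume KC: "K \<in> C"
      show "K \<in> Cov U C"
      proof (rule ccontr)
        assume nK: "K \<notin> Cov U C"
        let ?D = "nbhd C ` K"
        have KU: "K \<subseteq> U" using KC cov(2) by blast
        have "?D \<subseteq> C - {K}"
        proof
          fix N assume "N \<in> ?D"
          then obtain x where x: "x \<in> K" "N = nbhd C x" by blast
          have "N \<in> Cov U C" using x KU unfolding Cov_def by blast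
          thus "N \<in> C - {K}" using sub nK by blast
        qed
        moreover have "K = \<Union>?D"
        proof
          show "K \<subseteq> \<Union>?D" using nbhd_mem[of _ C] by fastforce
          show "\<Union>?D \<subseteq> K" using nbhd_sub[OF KC] by auto
        qed
        ultimately have "reducible_elem C K" unfolding reducible_elem_def using KC by blast
        thus False using irr KC unfolding irreducible_cov_def by blast
      qed
    qed
    with sub show "Cov U C = C" by blast
  qed
qed

end
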